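(* The optimal objective value of the multi-commodity NPP equals the optimal objective value of the conjugate bilevel formulation $\max_{w,t}\{w^\top t : w\in\mathbb{R}^{\mathcal{A}_1},\ w\ge 0,\ t\in\mathbf{T}(w)\}$.
   Context: Let $G=(\mathcal{V},\mathcal{A})$ be a directed graph with arc costs $c\in\mathbb{R}^{\mathcal{A}}$, $c\ge0$, arcs partitioned into a nonempty set $\mathcal{A}_1\subsetneq\mathcal{A}$ of tolled arcs and $\mathcal{A}_2=\mathcal{A}\setminus\mathcal{A}_1$ of toll-free arcs; $N$ is the node–arc incidence matrix. There is a finite set $\mathcal{K}$ of commodities, commodity $k$ having origin $o^k$, destination $d^k$, with an $o^k$–$d^k$ path of toll-free arcs assumed to exist; $b^k\in\mathbb{R}^{\mathcal{V}}$ has $b^k_{o^k}=1$, $b^k_{d^k}=-1$, other entries $0$. Tolls are vectors $t\in\mathbb{R}^{\mathcal{A}_1}$, $t\ge0$, identified with the vector $\bar t\in\mathbb{R}^{\mathcal{A}}$ equal to $t$ on $\mathcal{A}_1$ and $0$ on $\mathcal{A}_2$; for $x\in\mathbb{R}^{\mathcal{A}}$, $x_{\mathcal{A}_1}$ denotes its restriction to $\mathcal{A}_1$. Follower $k$'s reaction set is $\mathbf{R}^k(t)=\arg\min_x\{c^\top x+t^\top x_{\mathcal{A}_1}: Nx=b^k,\ x\ge0\}$, and the multi-commodity NPP is $\max_{t,x^k}\{\sum_{k}t^\top x^k_{\mathcal{A}_1}: t\ge0,\ x^k\in\mathbf{R}^k(t)\ \forall k\}$. For $w\in\mathbb{R}^{\mathcal{A}_1}$,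 $w\ge0$, the conjugate follower program is $\max_{t,(y^k)}\{\sum_{k\in\mathcal{K}}(b^k)^\top y^k - w^\top t : N^\top y^k-\bar t\le c\ \forall k\in\mathcal{K},\ t\ge 0\}$ with $t\in\mathbb{R}^{\mathcal{A}_1}$, $y^k\in\mathbb{R}^{\mathcal{V}}$, and $\mathbf{T}(w)$ denotes the set of $t$ that are parts of optimal solutions of this program. *)

theory Defs
  imports "HOL-Analysis.Analysis"
begin

text \<open>Directed graph: vertex set V, arc set A, each arc a goes from tail a to head a.
  Vectors indexed by arcs/vertices are real-valued functions; only their values on
  A (resp. A1, V) matter.\<close>

definition incidence :: "('a \<Rightarrow> 'v) \<Rightarrow> ('a \<Rightarrow> 'v) \<Rightarrow> 'v \<Rightarrow> 'a \<Rightarrow> real" where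
  "incidence tail head v a = (if tail a = v then 1 else 0) - (if head a = v then 1 else 0)"

definition demand :: "'v \<Rightarrow> 'v \<Rightarrow> 'v \<Rightarrow> real" where
  "demand o' d v = (if v = o' then 1 else if v = d then -1 else 0)"

definition toll_free_path ::
  "'a set \<Rightarrow> 'a set \<Rightarrow> ('a \<Rightarrow> 'v) \<Rightarrow> ('a \<Rightarrow> 'v) \<Rightarrow> 'v \<Rightarrow> 'v \<Rightarrow> bool" where
  "toll_free_path A A1 tail head o' d \<longleftrightarrow>
     (\<exists>ps. ps \<noteq> [] \<and> set ps \<subseteq> A - A1 \<and> tail (List.hd ps) = o' \<and> head (last ps) = d \<and>
        (\<forall>i. Suc i < length ps \<longrightarrow> head (ps ! i) = tail (ps ! Suc i)))"

definition flow_feasible ::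
  "'v set \<Rightarrow> 'a set \<Rightarrow> ('a \<Rightarrow> 'v) \<Rightarrow> ('a \<Rightarrow> 'v) \<Rightarrow> ('v \<Rightarrow> real) \<Rightarrow> ('a \<Rightarrow> real) \<Rightarrow> bool" where
  "flow_feasible V A tail head b x \<longleftrightarrow>
     (\<forall>v\<in>V. (\<Sum>a\<in>A. incidence tail head v a * x a) = b v) \<and> (\<forall>a\<in>A. 0 \<le> x a)"

definition follower_cost ::
  "'a set \<Rightarrow> 'a set \<Rightarrow> ('a \<Rightarrow> real) \<Rightarrow> ('a \<Rightarrow> real) \<Rightarrow> ('a \<Rightarrow> real) \<Rightarrow> real" where
  "follower_cost A A1 c t x = (\<Sum>a\<in>A. c a * x a) + (\<Sum>a\<in>A1. t a * x a)"

definition reaction ::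
  "'v set \<Rightarrow> 'a set \<Rightarrow> 'a set \<Rightarrow> ('a \<Rightarrow> 'v) \<Rightarrow> ('a \<Rightarrow> 'v) \<Rightarrow> ('a \<Rightarrow> real)
    \<Rightarrow> ('v \<Rightarrow> real) \<Rightarrow> ('a \<Rightarrow> real) \<Rightarrow> ('a \<Rightarrow> real) set" where
  "reaction V A A1 tail head c b t =
     {x. flow_feasible V A tail head b x \<and>
         (\<forall>x'. flow_feasible V A tail head b x' \<longrightarrow> follower_cost A A1 c t x \<le> follower_cost A A1 c t x')}"

definition npp_value ::
  "'v set \<Rightarrow> 'a set \<Rightarrow> 'a set \<Rightarrow> ('a \<Rightarrow> 'v) \<Rightarrow> ('a \<Rightarrow> 'v) \<Rightarrow> ('a \<Rightarrow> real)
    \<Rightarrow> 'k set \<Rightarrow> ('k \<Rightarrow> 'v) \<Rightarrow> ('k \<Rightarrow> 'v) \<Rightarrow> ereal" where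
  "npp_value V A A1 tail head c K orig dest =
     Sup {ereal (\<Sum>k\<in>K. \<Sum>a\<in>A1. t a * x k a) | t x.
            (\<forall>a\<in>A1. 0 \<le> t a) \<and>
            (\<forall>k\<in>K. x k \<in> reaction V A A1 tail head c (demand (orig k) (dest k)) t)}"

definition tbar :: "'a set \<Rightarrow> ('a \<Rightarrow> real) \<Rightarrow> 'a \<Rightarrow> real" where
  "tbar A1 t a = (if a \<in> A1 then t a else 0)"

definition conj_feasible ::
  "'v set \<Rightarrow> 'a set \<Rightarrow> 'a set \<Rightarrow> ('a \<Rightarrow> 'v) \<Rightarrow> ('a \<Rightarrow> 'v) \<Rightarrow> ('a \<Rightarrow> real)
    \<Rightarrow> 'k set \<Rightarrow> ('a \<Rightarrow> real) \<Rightarrow> ('k \<Rightarrow> 'v \<Rightarrow> real) \<Rightarrow> bool" where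
  "conj_feasible V A A1 tail head c K t y \<longleftrightarrow>
     (\<forall>a\<in>A1. 0 \<le> t a) \<and>
     (\<forall>k\<in>K. \<forall>a\<in>A. (\<Sum>v\<in>V. incidence tail head v a * y k v) - tbar A1 t a \<le> c a)"

definition conj_objective ::
  "'v set \<Rightarrow> 'a set \<Rightarrow> 'k set \<Rightarrow> ('k \<Rightarrow> 'v) \<Rightarrow> ('k \<Rightarrow> 'v) \<Rightarrow> ('a \<Rightarrow> real)
    \<Rightarrow> ('a \<Rightarrow> real) \<Rightarrow> ('k \<Rightarrow> 'v \<Rightarrow> real) \<Rightarrow> real" where
  "conj_objective V A1 K orig dest w t y =
     (\<Sum>k\<in>K. \<Sum>v\<in>V. demand (orig k) (dest k) v * y k v) - (\<Sum>a\<in>A1. w a * t a)"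

definition conj_T ::
  "'v set \<Rightarrow> 'a set \<Rightarrow> 'a set \<Rightarrow> ('a \<Rightarrow> 'v) \<Rightarrow> ('a \<Rightarrow> 'v) \<Rightarrow> ('a \<Rightarrow> real)
    \<Rightarrow> 'k set \<Rightarrow> ('k \<Rightarrow> 'v) \<Rightarrow> ('k \<Rightarrow> 'v) \<Rightarrow> ('a \<Rightarrow> real) \<Rightarrow> ('a \<Rightarrow> real) set" where
  "conj_T V A A1 tail head c K orig dest w =
     {t. \<exists>y. conj_feasible V A A1 tail head c K t y \<and>
            (\<forall>t' y'. conj_feasible V A A1 tail head c K t' y' \<longrightarrow>
               conj_objective V A1 K orig dest w t' y' \<le> conj_objective V A1 K orig dest w t y)}"

definition conj_bilevel_value ::
  "'v set \<Rightarrow> 'a set \<Rightarrow> 'a set \<Rightarrow> ('a \<Rightarrow> 'v) \<Rightarrow> ('a \<Rightarrow> 'v) \<Rightarrow> ('a \<Rightarrow> real)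
    \<Rightarrow> 'k set \<Rightarrow> ('k \<Rightarrow> 'v) \<Rightarrow> ('k \<Rightarrow> 'v) \<Rightarrow> ereal" where
  "conj_bilevel_value V A A1 tail head c K orig dest =
     Sup {ereal (\<Sum>a\<in>A1. w a * t a) | w t.
            (\<forall>a\<in>A1. 0 \<le> w a) \<and> t \<in> conj_T V A A1 tail head c K orig dest w}"

end

theory Submission
  imports Defs
begin


type_synonym 'i cstr = "('i \<Rightarrow> real) \<times> real"

inductive_set pcone :: "'i cstr set \<Rightarrow> 'i cstr set" for C where
  base: "q \<in> C \<Longrightarrow> q \<in> pcone C"
| add: "p \<in> pcone C \<Longrightarrow> q \<in> pcone C \<Longrightarrow> (\<lambda>i. fst p i + fst q i, snd p + snd q) \<in> pcone C"
| scale: "p \<in> pcone C \<Longrightarrow> 0 \<le> c \<Longrightarrow> (\<lambda>i. c * fst p i, c * snd p) \<in> pcone C"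

lemma pcone_trans: "q \<in> pcone C' \<Longrightarrow> C' \<subseteq> pcone C \<Longrightarrow> q \<in> pcone C"
  by (induction rule: pcone.induct) (auto intro: pcone.intros)

lemma pcone_zero_coord: "q \<in> pcone C \<Longrightarrow> \<forall>p\<in>C. fst p i0 = 0 \<Longrightarrow> fst q i0 = 0"
  by (induction rule: pcone.induct) auto

lemma pcone_lin:
  assumes "p \<in> pcone C" "n \<in> pcone C" "0 \<le> a" "0 \<le> b"
  shows "(\<lambda>i. a * fst p i + b * fst n i, a * snd p + b * snd n) \<in> pcone C"
  using pcone.add[OF pcone.scale[OF assms(1) assms(3)] pcone.scale[OF assms(2) assms(4)]] by simp

lemma pcone_sum_form:
  assumes "q \<in> pcone C" "finite C"
  shows "\<exists>u. (\<forall>p\<in>C. 0 \<le> u p) \<and> (\<forall>i. fst q i = (\<Sum>p\<in>C. u p * fst p i)) \<and> snd q = (\<Sum>p\<in>C. u p * snd p)"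
  using assms
proof (induction rule: pcone.induct)
  case (base q)
  show ?case
  proof (rule exI[of _ "\<lambda>p. if p = q then 1 else 0"])
    have h: "(\<Sum>p\<in>C. (if p = q then 1 else 0) * g p) = g q" for g :: "'a cstr \<Rightarrow> real"
    proof -
      have "(\<Sum>p\<in>C. (if p = q then 1 else 0) * g p) = (\<Sum>p\<in>C. if p = q then g p else 0)"
        by (rule sum.cong) auto
      then show ?thesis using base by simp
    qed
    show "(\<forall>p\<in>C. (0::real) \<le> (if p = q then 1 else 0)) \<and> (\<forall>i. fst q i = (\<Sum>p\<in>C. (if p = q then 1 else 0) * fst p i)) \<and> snd q = (\<Sum>p\<in>C. (if p = q then 1 else 0) * snd p)"
      using h[of "\<lambda>p. fst p _"] h[of snd] by auto
  qed
next
  case (add p q)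
  then obtain u1 u2 where u1: "(\<forall>p\<in>C. 0 \<le> u1 p) \<and> (\<forall>i. fst p i = (\<Sum>p\<in>C. u1 p * fst p i)) \<and> snd p = (\<Sum>p\<in>C. u1 p * snd p)"
    and u2: "(\<forall>p\<in>C. 0 \<le> u2 p) \<and> (\<forall>i. fst q i = (\<Sum>p\<in>C. u2 p * fst p i)) \<and> snd q = (\<Sum>p\<in>C. u2 p * snd p)"
    by blast
  show ?case
    by (rule exI[of _ "\<lambda>p. u1 p + u2 p"]) (use u1 u2 in \<open>auto simp: distrib_right sum.distrib\<close>)
next
  case (scale p c)
  then obtain u where u: "(\<forall>p\<in>C. 0 \<le> u p) \<and> (\<forall>i. fst p i = (\<Sum>p\<in>C. u p * fst p i)) \<and> snd p = (\<Sum>p\<in>C. u p * snd p)"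
    by blast
  show ?case
    by (rule exI[of _ "\<lambda>p. c * u p"]) (use u scale in \<open>auto simp: sum_distrib_left mult.assoc\<close>)
qed

definition sat :: "'i set \<Rightarrow> 'i cstr set \<Rightarrow> ('i \<Rightarrow> real) \<Rightarrow> bool" where
  "sat I C z \<longleftrightarrow> (\<forall>q\<in>C. (\<Sum>i\<in>I. fst q i * z i) \<le> snd q)"

definition comb :: "'i \<Rightarrow> 'i cstr \<Rightarrow> 'i cstr \<Rightarrow> 'i cstr" where
  "comb i0 p n = (\<lambda>i. (- fst n i0) * fst p i + fst p i0 * fst n i, (- fst n i0) * snd p + fst p i0 * snd n)"

lemma choose_between:
  fixes lo hi :: "'b \<Rightarrow> real"
  assumes "finite P" "finite N" "\<forall>n\<in>N. \<forall>p\<in>P. lo n \<le> hi p"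
  shows "\<exists>v. (\<forall>n\<in>N. lo n \<le> v) \<and> (\<forall>p\<in>P. v \<le> hi p)"
proof (cases "P = {}")
  case True
  show ?thesis
  proof (cases "N = {}")
    case True with \<open>P={}\<close> show ?thesis by auto
  next
    case False
    show ?thesis using True False assms by (intro exI[of _ "Max (lo ` N)"]) auto
  qed
next
  case False
  show ?thesis using False assms by (intro exI[of _ "Min (hi ` P)"]) auto
qed

lemma fm_main:
  assumes "finite I"
  shows "finite C \<Longrightarrow> \<not>(\<exists>z. sat I C z) \<Longrightarrow> \<exists>q\<in>pcone C. (\<forall>i\<in>I. fst q i = 0) \<and> snd q < 0"
  using assms
proof (induction I arbitrary: C rule: finite_induct)
  case empty
  then obtain q where "q \<in> C" "\<not> 0 \<le> snd q" by (auto simp: sat_def)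
  then show ?case by (auto intro!: bexI[of _ q] pcone.base)
next
  case (insert i0 I)
  define C0 where "C0 = {q\<in>C. fst q i0 = 0}"
  define CP where "CP = {q\<in>C. fst q i0 > 0}"
  define CN where "CN = {q\<in>C. fst q i0 < 0}"
  define C' where "C' = C0 \<union> (\<lambda>(p,n). comb i0 p n) ` (CP \<times> CN)"
  have finC': "finite C'" using insert.prems(1) by (auto simp: C'_def C0_def CP_def CN_def)
  have sub: "C' \<subseteq> pcone C"
  proof
    fix q assume "q \<in> C'"
    then consider "q \<in> C0" | p n where "p \<in> CP" "n \<in> CN" "q = comb i0 p n"
      unfolding C'_def by auto
    then show "q \<in> pcone C"
    proof cases
      case 1 then show ?thesis by (auto simp: C0_def intro: pcone.base)
    next
      case 2
      have "comb i0 p n \<in> pcone C" unfolding comb_def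
        by (rule pcone_lin) (use 2 in \<open>auto simp: CP_def CN_def intro: pcone.base\<close>)
      then show ?thesis using 2 by simp
    qed
  qed
  have zero': "\<forall>p\<in>C'. fst p i0 = 0"
    by (auto simp: C'_def C0_def comb_def)
  have nsat: "\<not>(\<exists>z. sat I C' z)"
  proof
    assume "\<exists>z. sat I C' z"
    then obtain z where z: "sat I C' z" by blast
    define s where "s q = (\<Sum>i\<in>I. fst q i * z i)" for q :: "'a cstr"
    define lo where "lo n = (snd n - s n) / fst n i0" for n
    define hi where "hi p = (snd p - s p) / fst p i0" for p
    have "\<forall>n\<in>CN. \<forall>p\<in>CP. lo n \<le> hi p"
    proof (intro ballI)
      fix n p assume n: "n \<in> CN" and p: "p \<in> CP"
      have "comb i0 p n \<in> C'" using n p unfolding C'_def by auto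
      then have "s (comb i0 p n) \<le> snd (comb i0 p n)" using z unfolding sat_def s_def by auto
      moreover have "s (comb i0 p n) = (- fst n i0) * s p + fst p i0 * s n"
        unfolding s_def comb_def by (simp add: sum.distrib sum_distrib_left sum_subtractf sum_negf algebra_simps)
      ultimately have ineq: "(- fst n i0) * s p + fst p i0 * s n \<le> (- fst n i0) * snd p + fst p i0 * snd n"
        by (simp add: comb_def)
      have n0: "fst n i0 < 0" and p0: "fst p i0 > 0" using n p by (auto simp: CN_def CP_def)
      have "fst p i0 * (- fst n i0) * (hi p - lo n) = (- fst n i0) * (snd p - s p) + fst p i0 * (snd n - s n)"
        using n0 p0 unfolding hi_def lo_def by (simp add: field_simps)
      also have "\<dots> \<ge> 0" using ineq by (simp add: algebra_simps)
      finally have "0 \<le> fst p i0 * (- fst n i0) * (hi p - lo n)" .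
      moreover have "fst p i0 * (- fst n i0) > 0" using n0 p0 by (simp add: mult_pos_neg)
      moreover have "\<And>k d::real. 0 < k \<Longrightarrow> 0 \<le> k * d \<Longrightarrow> 0 \<le> d" by (simp add: zero_le_mult_iff)
      ultimately have "0 \<le> hi p - lo n" by blast
      then show "lo n \<le> hi p" by simp
    qed
    moreover have "finite CP" "finite CN" using insert.prems(1) by (auto simp: CP_def CN_def)
    ultimately obtain v where v1: "\<forall>n\<in>CN. lo n \<le> v" and v2: "\<forall>p\<in>CP. v \<le> hi p"
      using choose_between[of CP CN lo hi] by blast
    have "sat (insert i0 I) C (z(i0 := v))"
      unfolding sat_def
    proof
      fix q assume q: "q \<in> C"
      have eq: "(\<Sum>i\<in>insert i0 I. fst q i * (z(i0 := v)) i) = fst q i0 * v + s q"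
      proof -
        have "(\<Sum>i\<in>I. fst q i * (z(i0 := v)) i) = s q"
          unfolding s_def using insert.hyps by (intro sum.cong) auto
        then show ?thesis using insert.hyps by simp
      qed
      have "fst q i0 * v + s q \<le> snd q"
      proof (cases "fst q i0 = 0")
        case True
        then have "q \<in> C'" using q by (auto simp: C'_def C0_def)
        then show ?thesis using z True unfolding sat_def s_def by auto
      next
        case False
        show ?thesis
        proof (cases "fst q i0 > 0")
          case True
          then have "q \<in> CP" using q unfolding CP_def by auto
          then have "v \<le> hi q" using v2 by blast
          then have "v \<le> (snd q - s q) / fst q i0" unfolding hi_def .
          then show ?thesis using True by (simp add: pos_le_divide_eq mult.commute)
        next
          case False2: False
          then have neg: "fst q i0 < 0" using False by simp
          then have "q \<in> CN" using q unfolding CN_def by auto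
          then have "lo q \<le> v" using v1 by blast
          then have "(snd q - s q) / fst q i0 \<le> v" unfolding lo_def .
          then show ?thesis using neg by (simp add: neg_divide_le_eq mult.commute)
        qed
      qed
      then show "(\<Sum>i\<in>insert i0 I. fst q i * (z(i0 := v)) i) \<le> snd q" using eq by simp
    qed
    then show False using insert.prems(2) by blast
  qed
  obtain q where q: "q \<in> pcone C'" "\<forall>i\<in>I. fst q i = 0" "snd q < 0"
    using insert.IH[OF finC' nsat] by blast
  have "fst q i0 = 0" using pcone_zero_coord[OF q(1) zero'] .
  then show ?case using q pcone_trans[OF q(1) sub] by (intro bexI[of _ q]) auto
qed

lemma sum_fiber_avg:
  fixes h :: "'j \<Rightarrow> 'q" and u g :: "'q \<Rightarrow> real"
  assumes "finite J"
  shows "(\<Sum>j\<in>J. (u (h j) / card {j'\<in>J. h j' = h j}) * g (h j)) = (\<Sum>q\<in>h ` J. u q * g q)"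
proof -
  have "(\<Sum>j\<in>J. (u (h j) / card {j'\<in>J. h j' = h j}) * g (h j))
      = (\<Sum>q\<in>h ` J. \<Sum>j\<in>{j\<in>J. h j = q}. (u (h j) / card {j'\<in>J. h j' = h j}) * g (h j))"
    using assms by (rule sum.image_gen)
  also have "\<dots> = (\<Sum>q\<in>h ` J. u q * g q)"
  proof (rule sum.cong)
    fix q assume q: "q \<in> h ` J"
    have "(\<Sum>j\<in>{j\<in>J. h j = q}. (u (h j) / card {j'\<in>J. h j' = h j}) * g (h j))
        = (\<Sum>j\<in>{j\<in>J. h j = q}. (u q / card {j'\<in>J. h j' = q}) * g q)"
      by (rule sum.cong) auto
    also have "\<dots> = card {j\<in>J. h j = q} * ((u q / card {j'\<in>J. h j' = q}) * g q)" by simp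
    also have "\<dots> = u q * g q"
    proof -
      have "{j\<in>J. h j = q} \<noteq> {}" using q by auto
      moreover have "finite {j\<in>J. h j = q}" using assms by auto
      ultimately have "card {j\<in>J. h j = q} > 0" by (simp add: card_gt_0_iff)
      then show ?thesis by (simp add: field_simps)
    qed
    finally show "(\<Sum>j\<in>{j\<in>J. h j = q}. (u (h j) / card {j'\<in>J. h j' = h j}) * g (h j)) = u q * g q" .
  qed simp
  finally show ?thesis .
qed

lemma farkas:
  fixes M :: "'j \<Rightarrow> 'i \<Rightarrow> real" and r :: "'j \<Rightarrow> real"
  assumes "finite I" "finite J" "\<not>(\<exists>z. \<forall>j\<in>J. (\<Sum>i\<in>I. M j i * z i) \<le> r j)"
  shows "\<exists>u. (\<forall>j\<in>J. 0 \<le> u j) \<and> (\<forall>i\<in>I. (\<Sum>j\<in>J. u j * M j i) = 0) \<and> (\<Sum>j\<in>J. u j * r j) < 0"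
proof -
  define h where "h j = (M j, r j)" for j
  define C where "C = h ` J"
  have finC: "finite C" using assms(2) by (simp add: C_def)
  have "\<not>(\<exists>z. sat I C z)" using assms(3) by (auto simp: sat_def C_def h_def)
  then obtain q where q: "q \<in> pcone C" "\<forall>i\<in>I. fst q i = 0" "snd q < 0"
    using fm_main[OF assms(1) finC] by blast
  obtain u where u: "\<forall>p\<in>C. 0 \<le> u p" "\<forall>i. fst q i = (\<Sum>p\<in>C. u p * fst p i)" "snd q = (\<Sum>p\<in>C. u p * snd p)"
    using pcone_sum_form[OF q(1) finC] by blast
  define u' where "u' j = u (h j) / card {j'\<in>J. h j' = h j}" for j
  have avg: "(\<Sum>j\<in>J. u' j * g (h j)) = (\<Sum>p\<in>C. u p * g p)" for g
    unfolding u'_def C_def by (rule sum_fiber_avg[OF assms(2)])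
  show ?thesis
  proof (intro exI[of _ u'] conjI ballI)
    fix j assume "j \<in> J"
    then show "0 \<le> u' j" using u(1) by (auto simp: u'_def C_def)
  next
    fix i assume "i \<in> I"
    have "(\<Sum>j\<in>J. u' j * M j i) = (\<Sum>j\<in>J. u' j * (\<lambda>p. fst p i) (h j))" by (simp add: h_def)
    also have "\<dots> = fst q i" using avg u(2) by simp
    finally show "(\<Sum>j\<in>J. u' j * M j i) = 0" using q(2) \<open>i \<in> I\<close> by simp
  next
    have "(\<Sum>j\<in>J. u' j * r j) = (\<Sum>j\<in>J. u' j * snd (h j))" by (simp add: h_def)
    also have "\<dots> = snd q" using avg u(3) by simp
    finally show "(\<Sum>j\<in>J. u' j * r j) < 0" using q(3) by simp
  qed
qed



lemma fc_tbar:
  assumes "finite A" "A1 \<subseteq> A"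
  shows "follower_cost A A1 c t x = (\<Sum>a\<in>A. (c a + tbar A1 t a) * x a)"
proof -
  have "(\<Sum>a\<in>A. tbar A1 t a * x a) = (\<Sum>a\<in>A. if a \<in> A1 then t a * x a else 0)"
    by (rule sum.cong) (auto simp: tbar_def)
  also have "\<dots> = (\<Sum>a\<in>A \<inter> A1. t a * x a)" using assms(1) by (simp add: sum.inter_restrict)
  also have "A \<inter> A1 = A1" using assms(2) by blast
  finally show ?thesis by (simp add: follower_cost_def distrib_right sum.distrib)
qed

lemma wd_swap:
  fixes N :: "'v \<Rightarrow> 'a \<Rightarrow> real"
  shows "(\<Sum>v\<in>V. (\<Sum>a\<in>A. N v a * x a) * y v) = (\<Sum>a\<in>A. x a * (\<Sum>v\<in>V. N v a * y v))"
  by (simp add: sum_distrib_left sum_distrib_right mult_ac sum.swap[of _ V])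

lemma dual_exists:
  assumes fV: "finite V" and fA: "finite A" and A1A: "A1 \<subseteq> A" and c0: "\<forall>a\<in>A. 0 \<le> c a"
    and t0: "\<forall>a\<in>A1. 0 \<le> t a" and x: "x \<in> reaction V A A1 tail head c b t"
  shows "\<exists>y. (\<forall>a\<in>A. (\<Sum>v\<in>V. incidence tail head v a * y v) - tbar A1 t a \<le> c a)
             \<and> follower_cost A A1 c t x \<le> (\<Sum>v\<in>V. b v * y v)"
proof (rule ccontr)
  assume nex: "\<not> ?thesis"
  define F where "F = follower_cost A A1 c t x"
  define M where "M = case_sum (\<lambda>a v. incidence tail head v a) (\<lambda>(_::unit) v. - b v)"
  define r where "r = case_sum (\<lambda>a. c a + tbar A1 t a) (\<lambda>(_::unit). - F)"
  have "\<not>(\<exists>z. \<forall>j\<in>A <+> {()}. (\<Sum>v\<in>V. M j v * z v) \<le> r j)"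
  proof
    assume "\<exists>z. \<forall>j\<in>A <+> {()}. (\<Sum>v\<in>V. M j v * z v) \<le> r j"
    then obtain z where z: "\<forall>j\<in>A <+> {()}. (\<Sum>v\<in>V. M j v * z v) \<le> r j" by blast
    have "\<forall>a\<in>A. (\<Sum>v\<in>V. incidence tail head v a * z v) - tbar A1 t a \<le> c a"
    proof
      fix a assume "a \<in> A"
      then have "Inl a \<in> A <+> {()}" by auto
      then show "(\<Sum>v\<in>V. incidence tail head v a * z v) - tbar A1 t a \<le> c a"
        using z by (force simp: M_def r_def)
    qed
    moreover have "F \<le> (\<Sum>v\<in>V. b v * z v)"
    proof -
      have "Inr () \<in> A <+> {()}" by auto
      then have "(\<Sum>v\<in>V. - b v * z v) \<le> - F" using z by (force simp: M_def r_def)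
      then show ?thesis by (simp add: sum_negf)
    qed
    ultimately show False using nex unfolding F_def by blast
  qed
  then obtain u where u0: "\<forall>j\<in>A <+> {()}. 0 \<le> u j"
    and ucol: "\<forall>v\<in>V. (\<Sum>j\<in>A <+> {()}. u j * M j v) = 0"
    and urhs: "(\<Sum>j\<in>A <+> {()}. u j * r j) < 0"
    using farkas[OF fV, of "A <+> {()}" M r] fA by auto
  define \<alpha> where "\<alpha> a = u (Inl a)" for a
  define \<nu> where "\<nu> = u (Inr ())"
  have \<alpha>0: "\<forall>a\<in>A. 0 \<le> \<alpha> a" using u0 by (auto simp: \<alpha>_def)
  have col: "(\<Sum>a\<in>A. \<alpha> a * incidence tail head v a) = \<nu> * b v" if "v \<in> V" for v
    using ucol that fA by (simp add: sum.Plus M_def \<alpha>_def \<nu>_def comp_def)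
  have rhs: "(\<Sum>a\<in>A. \<alpha> a * (c a + tbar A1 t a)) < \<nu> * F"
    using urhs fA by (simp add: sum.Plus r_def \<alpha>_def \<nu>_def comp_def)
  have tb0: "\<forall>a\<in>A. 0 \<le> c a + tbar A1 t a" using c0 t0 by (auto simp: tbar_def)
  have s0: "0 \<le> (\<Sum>a\<in>A. \<alpha> a * (c a + tbar A1 t a))"
    using \<alpha>0 tb0 by (intro sum_nonneg) auto
  have "\<nu> \<noteq> 0" using rhs s0 by auto
  moreover have "0 \<le> \<nu>" using u0 by (auto simp: \<nu>_def)
  ultimately have \<nu>pos: "0 < \<nu>" by simp
  define x' where "x' a = \<alpha> a / \<nu>" for a
  have "flow_feasible V A tail head b x'"
    unfolding flow_feasible_def
  proof (intro conjI ballI)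
    fix v assume "v \<in> V"
    have "(\<Sum>a\<in>A. incidence tail head v a * x' a) = (\<Sum>a\<in>A. \<alpha> a * incidence tail head v a) / \<nu>"
      by (simp add: x'_def sum_divide_distrib mult_ac)
    also have "\<dots> = b v" using col[OF \<open>v \<in> V\<close>] \<nu>pos by simp
    finally show "(\<Sum>a\<in>A. incidence tail head v a * x' a) = b v" .
  next
    fix a assume "a \<in> A" then show "0 \<le> x' a" using \<alpha>0 \<nu>pos by (simp add: x'_def)
  qed
  then have "F \<le> follower_cost A A1 c t x'" using x unfolding reaction_def F_def by blast
  also have "\<dots> = (\<Sum>a\<in>A. \<alpha> a * (c a + tbar A1 t a)) / \<nu>"
    unfolding fc_tbar[OF fA A1A] by (simp add: x'_def sum_divide_distrib mult_ac)
  also have "\<dots> < F" using rhs \<nu>pos by (simp add: divide_less_eq mult.commute)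
  finally show False by simp
qed

lemma sum_w_swap:
  "(\<Sum>a\<in>A1. (\<Sum>k\<in>K. x k a) * t a) = (\<Sum>k\<in>K. \<Sum>a\<in>A1. t a * (x k a :: real))"
  by (simp add: sum_distrib_left sum_distrib_right mult_ac sum.swap[of _ A1])

lemma dir1:
  assumes fV: "finite V" and fA: "finite A" and A1A: "A1 \<subseteq> A" and c0: "\<forall>a\<in>A. 0 \<le> c a"
    and fK: "finite K"
    and t0: "\<forall>a\<in>A1. 0 \<le> t a"
    and x: "\<forall>k\<in>K. x k \<in> reaction V A A1 tail head c (demand (orig k) (dest k)) t"
  shows "t \<in> conj_T V A A1 tail head c K orig dest (\<lambda>a. \<Sum>k\<in>K. x k a)"
proof -
  define bb where "bb k = demand (orig k) (dest k)" for k
  define w where "w a = (\<Sum>k\<in>K. x k a)" for a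
  have "\<forall>k\<in>K. \<exists>y. (\<forall>a\<in>A. (\<Sum>v\<in>V. incidence tail head v a * y v) - tbar A1 t a \<le> c a)
             \<and> follower_cost A A1 c t (x k) \<le> (\<Sum>v\<in>V. bb k v * y v)"
    using dual_exists[OF fV fA A1A c0 t0] x unfolding bb_def by blast
  then obtain y where y: "\<And>k. k \<in> K \<Longrightarrow> (\<forall>a\<in>A. (\<Sum>v\<in>V. incidence tail head v a * y k v) - tbar A1 t a \<le> c a)
             \<and> follower_cost A A1 c t (x k) \<le> (\<Sum>v\<in>V. bb k v * y k v)"
    by metis
  have feas: "conj_feasible V A A1 tail head c K t y"
    unfolding conj_feasible_def using t0 y by blast
  define Cx where "Cx = (\<Sum>k\<in>K. \<Sum>a\<in>A. c a * x k a)"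
  have flow: "\<And>k. k \<in> K \<Longrightarrow> flow_feasible V A tail head (bb k) (x k)"
    using x unfolding reaction_def bb_def by blast
  have wsum: "(\<Sum>a\<in>A1. w a * t' a) = (\<Sum>k\<in>K. \<Sum>a\<in>A1. t' a * x k a)" for t'
    unfolding w_def by (rule sum_w_swap)
  have "Cx \<le> conj_objective V A1 K orig dest w t y"
  proof -
    have "(\<Sum>k\<in>K. follower_cost A A1 c t (x k)) \<le> (\<Sum>k\<in>K. \<Sum>v\<in>V. bb k v * y k v)"
      using y by (intro sum_mono) blast
    moreover have "(\<Sum>k\<in>K. follower_cost A A1 c t (x k)) = Cx + (\<Sum>a\<in>A1. w a * t a)"
      unfolding wsum Cx_def follower_cost_def by (simp add: sum.distrib)
    ultimately show ?thesis unfolding conj_objective_def bb_def by simp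
  qed
  moreover have "conj_objective V A1 K orig dest w t' y' \<le> Cx"
    if f': "conj_feasible V A A1 tail head c K t' y'" for t' y'
  proof -
    have "(\<Sum>v\<in>V. bb k v * y' k v) \<le> follower_cost A A1 c t' (x k)" if k: "k \<in> K" for k
    proof -
      have "(\<Sum>v\<in>V. bb k v * y' k v) = (\<Sum>v\<in>V. (\<Sum>a\<in>A. incidence tail head v a * x k a) * y' k v)"
        using flow[OF k] unfolding flow_feasible_def by simp
      also have "\<dots> = (\<Sum>a\<in>A. x k a * (\<Sum>v\<in>V. incidence tail head v a * y' k v))"
        by (rule wd_swap)
      also have "\<dots> \<le> (\<Sum>a\<in>A. x k a * (c a + tbar A1 t' a))"
      proof (rule sum_mono)
        fix a assume a: "a \<in> A"
        have "(\<Sum>v\<in>V. incidence tail head v a * y' k v) \<le> c a + tbar A1 t' a"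
          using f' k a unfolding conj_feasible_def by force
        moreover have "0 \<le> x k a" using flow[OF k] a unfolding flow_feasible_def by blast
        ultimately show "x k a * (\<Sum>v\<in>V. incidence tail head v a * y' k v) \<le> x k a * (c a + tbar A1 t' a)"
          by (rule mult_left_mono)
      qed
      also have "\<dots> = follower_cost A A1 c t' (x k)" unfolding fc_tbar[OF fA A1A] by (simp add: mult_ac)
      finally show ?thesis .
    qed
    then have "(\<Sum>k\<in>K. \<Sum>v\<in>V. bb k v * y' k v) \<le> (\<Sum>k\<in>K. follower_cost A A1 c t' (x k))"
      by (intro sum_mono) blast
    moreover have "(\<Sum>k\<in>K. follower_cost A A1 c t' (x k)) = Cx + (\<Sum>a\<in>A1. w a * t' a)"
      unfolding wsum Cx_def follower_cost_def by (simp add: sum.distrib)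
    ultimately show ?thesis unfolding conj_objective_def bb_def by simp
  qed
  ultimately show ?thesis unfolding conj_T_def w_def using feas by force
qed

lemma LF1:
  assumes "finite K" "finite A" "k \<in> K"
  shows "(\<Sum>i\<in>K \<times> A. (if fst i = k then f (snd i) else 0) * z i) = (\<Sum>a\<in>A. f a * (z (k, a) :: real))"
proof -
  have "\<And>k'. (\<Sum>a\<in>A. (if k' = k then f a else 0) * z (k', a)) = (if k' = k then (\<Sum>a\<in>A. f a * z (k, a)) else 0)"
    by auto
  then show ?thesis using assms by (simp only: sum.cartesian_product' snd_conv fst_conv) simp
qed

lemma LF2:
  assumes "finite K" "finite A" "a \<in> A"
  shows "(\<Sum>i\<in>K \<times> A. (if snd i = a then 1 else 0) * z i) = (\<Sum>k\<in>K. (z (k, a) :: real))"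
proof -
  have "\<And>k. (\<Sum>a'\<in>A. (if a' = a then 1 else 0) * z (k, a')) = (\<Sum>a'\<in>A. if a' = a then z (k, a') else 0)"
    by (rule sum.cong) auto
  then show ?thesis using assms by (simp add: sum.cartesian_product')
qed

lemma LF3:
  "(\<Sum>i\<in>K \<times> A. c (snd i) * z i) = (\<Sum>k\<in>K. \<Sum>a\<in>A. c a * (z (k, a) :: real))"
  by (simp add: sum.cartesian_product')

lemma LF0:
  assumes "finite S" "j \<in> S"
  shows "(\<Sum>i\<in>S. (if i = j then -1 else 0) * z i) = - (z j :: real)"
proof -
  have "(\<Sum>i\<in>S. (if i = j then -1 else 0) * z i) = (\<Sum>i\<in>S. if i = j then - z i else 0)"
    by (rule sum.cong) auto
  then show ?thesis using assms by simp
qed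

lemma LC0:
  assumes "finite S" "i \<in> S"
  shows "(\<Sum>j\<in>S. u j * (if i = j then -1 else 0)) = - (u i :: real)"
proof -
  have "(\<Sum>j\<in>S. u j * (if i = j then -1 else 0)) = (\<Sum>j\<in>S. if i = j then - u j else 0)"
    by (rule sum.cong) auto
  then show ?thesis using assms by simp
qed

lemma LC1:
  assumes "finite K" "finite V" "k \<in> K"
  shows "(\<Sum>j\<in>K \<times> V. g j * (if k = fst j then h (snd j) else 0)) = (\<Sum>v\<in>V. g (k, v) * (h v :: real))"
proof -
  have "\<And>k'. (\<Sum>v\<in>V. g (k', v) * (if k = k' then h v else 0)) = (if k = k' then (\<Sum>v\<in>V. g (k, v) * h v) else 0)"
    by auto
  then show ?thesis using assms by (simp only: sum.cartesian_product' snd_conv fst_conv) simp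
qed

lemma LC2:
  assumes "finite A1"
  shows "(\<Sum>a'\<in>A1. g a' * (if a = a' then 1 else 0)) = (if a \<in> A1 then (g a :: real) else 0)"
proof -
  have "(\<Sum>a'\<in>A1. g a' * (if a = a' then 1 else 0)) = (\<Sum>a'\<in>A1. if a = a' then g a' else 0)"
    by (rule sum.cong) auto
  then show ?thesis using assms by simp
qed

lemma dir2:
  fixes V :: "'v set" and A A1 :: "'a set" and tail head :: "'a \<Rightarrow> 'v"
    and c :: "'a \<Rightarrow> real" and K :: "'k set" and orig dest :: "'k \<Rightarrow> 'v" and w t :: "'a \<Rightarrow> real"
  assumes fV: "finite V" and fA: "finite A" and A1A: "A1 \<subseteq> A" and fK: "finite K"
    and w0: "\<forall>a\<in>A1. 0 \<le> w a"
    and tT: "t \<in> conj_T V A A1 tail head c K orig dest w"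
  shows "\<exists>X. (\<forall>a\<in>A1. 0 \<le> t a) \<and>
     (\<forall>k\<in>K. X k \<in> reaction V A A1 tail head c (demand (orig k) (dest k)) t) \<and>
     (\<Sum>k\<in>K. \<Sum>a\<in>A1. t a * X k a) = (\<Sum>a\<in>A1. w a * t a)"
proof -
  define N where "N v a = incidence tail head v a" for v a
  define bb where "bb k = demand (orig k) (dest k)" for k
  have fA1: "finite A1" using fA A1A by (rule finite_subset[rotated])
  obtain y where feas: "conj_feasible V A A1 tail head c K t y"
    and opt: "\<And>t' y'. conj_feasible V A A1 tail head c K t' y' \<Longrightarrow>
               conj_objective V A1 K orig dest w t' y' \<le> conj_objective V A1 K orig dest w t y"
    using tT unfolding conj_T_def by blast
  define OPT where "OPT = conj_objective V A1 K orig dest w t y"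
  have t0: "\<forall>a\<in>A1. 0 \<le> t a" using feas unfolding conj_feasible_def by blast
  have yc: "\<And>k a. k \<in> K \<Longrightarrow> a \<in> A \<Longrightarrow> (\<Sum>v\<in>V. N v a * y k v) - tbar A1 t a \<le> c a"
    using feas unfolding conj_feasible_def N_def by blast
  define J where "J = (K \<times> A) <+> ((K \<times> V) <+> ((K \<times> V) <+> (A1 <+> {()})))"
  have fJ: "finite J" using fK fA fV fA1 by (simp add: J_def)
  define M :: "('k \<times> 'a) + (('k \<times> 'v) + (('k \<times> 'v) + ('a + unit))) \<Rightarrow> 'k \<times> 'a \<Rightarrow> real" where
    "M = case_sum (\<lambda>j i. if i = j then -1 else 0)
       (case_sum (\<lambda>j i. if fst i = fst j then N (snd j) (snd i) else 0)
         (case_sum (\<lambda>j i. if fst i = fst j then - N (snd j) (snd i) else 0)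
            (case_sum (\<lambda>a' i. if snd i = a' then 1 else 0) (\<lambda>_ i. c (snd i)))))"
  define r :: "('k \<times> 'a) + (('k \<times> 'v) + (('k \<times> 'v) + ('a + unit))) \<Rightarrow> real" where
    "r = case_sum (\<lambda>_. 0) (case_sum (\<lambda>j. bb (fst j) (snd j))
           (case_sum (\<lambda>j. - bb (fst j) (snd j)) (case_sum w (\<lambda>_. OPT))))"
  have "\<exists>z. \<forall>j\<in>J. (\<Sum>i\<in>K \<times> A. M j i * z i) \<le> r j"
  proof (rule ccontr)
    assume "\<not> ?thesis"
    then obtain u where u0: "\<forall>j\<in>J. 0 \<le> u j"
      and ucol: "\<forall>i\<in>K \<times> A. (\<Sum>j\<in>J. u j * M j i) = 0"
      and urhs: "(\<Sum>j\<in>J. u j * r j) < 0"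
      using farkas[of "K \<times> A" J M r] fK fA fJ by auto
    define u1 where "u1 i = u (Inl i)" for i
    define u2 where "u2 j = u (Inr (Inl j))" for j
    define u3 where "u3 j = u (Inr (Inr (Inl j)))" for j
    define \<tau> where "\<tau> a = u (Inr (Inr (Inr (Inl a))))" for a
    define \<nu> where "\<nu> = u (Inr (Inr (Inr (Inr ()))))"
    define \<eta> where "\<eta> k v = u2 (k, v) - u3 (k, v)" for k v
    have \<tau>0: "\<forall>a\<in>A1. 0 \<le> \<tau> a" using u0 by (auto simp: J_def \<tau>_def)
    have \<nu>0: "0 \<le> \<nu>" using u0 by (auto simp: J_def \<nu>_def)
    have u10: "\<And>i. i \<in> K \<times> A \<Longrightarrow> 0 \<le> u1 i" using u0 by (auto simp: J_def u1_def)
    have col: "(\<Sum>v\<in>V. \<eta> k v * N v a) + tbar A1 \<tau> a + \<nu> * c a \<ge> 0" if k: "k \<in> K" and a: "a \<in> A" for k a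
    proof -
      have h1: "(\<Sum>x\<in>K \<times> V. u (Inr (Inl x)) * (if k = fst x then N (snd x) a else 0)) = (\<Sum>v\<in>V. u (Inr (Inl (k, v))) * N v a)"
        by (rule LC1[OF fK fV k])
      have h2: "(\<Sum>x\<in>K \<times> V. u (Inr (Inr (Inl x))) * (if k = fst x then - N (snd x) a else 0)) = (\<Sum>v\<in>V. u (Inr (Inr (Inl (k, v)))) * - N v a)"
        by (rule LC1[OF fK fV k])
      have "(\<Sum>j\<in>J. u j * M j (k, a)) = - u1 (k, a) + (\<Sum>v\<in>V. u2 (k, v) * N v a)
            + (\<Sum>v\<in>V. u3 (k, v) * - N v a) + (if a \<in> A1 then \<tau> a else 0) + \<nu> * c a"
        using k a fK fA fV fA1
        apply (simp add: J_def sum.Plus comp_def M_def u1_def u2_def u3_def \<tau>_def \<nu>_def LC0 LC2)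
        apply (simp only: snd_conv)
        using h1 h2 by simp
      moreover have "(\<Sum>j\<in>J. u j * M j (k, a)) = 0" using ucol k a by blast
      ultimately have "(\<Sum>v\<in>V. \<eta> k v * N v a) + tbar A1 \<tau> a + \<nu> * c a = u1 (k, a)"
        by (simp add: \<eta>_def tbar_def left_diff_distrib sum_subtractf sum_negf)
      then show ?thesis using u10[of "(k, a)"] k a by simp
    qed
    have rhs: "(\<Sum>k\<in>K. \<Sum>v\<in>V. \<eta> k v * bb k v) + (\<Sum>a\<in>A1. w a * \<tau> a) + \<nu> * OPT < 0"
    proof -
      have "(\<Sum>j\<in>J. u j * r j) = (\<Sum>k\<in>K. \<Sum>v\<in>V. u2 (k, v) * bb k v)
            + (\<Sum>k\<in>K. \<Sum>v\<in>V. u3 (k, v) * - bb k v) + (\<Sum>a\<in>A1. \<tau> a * w a) + \<nu> * OPT"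
        using fK fA fV fA1
        by (simp add: J_def sum.Plus comp_def r_def u2_def u3_def \<tau>_def \<nu>_def sum.cartesian_product')
      moreover have "(\<Sum>k\<in>K. \<Sum>v\<in>V. \<eta> k v * bb k v) = (\<Sum>k\<in>K. \<Sum>v\<in>V. u2 (k, v) * bb k v) + (\<Sum>k\<in>K. \<Sum>v\<in>V. u3 (k, v) * - bb k v)"
        by (simp add: \<eta>_def left_diff_distrib sum_subtractf sum_negf)
      moreover have "(\<Sum>a\<in>A1. w a * \<tau> a) = (\<Sum>a\<in>A1. \<tau> a * w a)" by (simp add: mult.commute)
      ultimately show ?thesis using urhs by simp
    qed
    define y' where "y' k v = (y k v - \<eta> k v) / (1 + \<nu>)" for k v
    define t' where "t' a = (t a + \<tau> a) / (1 + \<nu>)" for a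
    have pos: "0 < 1 + \<nu>" using \<nu>0 by simp
    have feas': "conj_feasible V A A1 tail head c K t' y'"
      unfolding conj_feasible_def
    proof (intro conjI ballI)
      fix a assume "a \<in> A1" then show "0 \<le> t' a" using t0 \<tau>0 pos by (simp add: t'_def)
    next
      fix k a assume k: "k \<in> K" and a: "a \<in> A"
      have e1: "(\<Sum>v\<in>V. incidence tail head v a * y' k v)
          = ((\<Sum>v\<in>V. N v a * y k v) - (\<Sum>v\<in>V. \<eta> k v * N v a)) / (1 + \<nu>)"
        unfolding y'_def N_def
        by (simp add: sum_divide_distrib[symmetric] sum_subtractf[symmetric] algebra_simps)
      have e2: "tbar A1 t' a = (tbar A1 t a + tbar A1 \<tau> a) / (1 + \<nu>)"
        by (simp add: tbar_def t'_def)
      have "(\<Sum>v\<in>V. N v a * y k v) - (\<Sum>v\<in>V. \<eta> k v * N v a) - (tbar A1 t a + tbar A1 \<tau> a) \<le> c a + \<nu> * c a"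
        using yc[OF k a] col[OF k a] by simp
      then have "((\<Sum>v\<in>V. N v a * y k v) - (\<Sum>v\<in>V. \<eta> k v * N v a)) / (1 + \<nu>) - (tbar A1 t a + tbar A1 \<tau> a) / (1 + \<nu>) \<le> c a"
        using pos by (simp add: diff_divide_distrib[symmetric] divide_le_eq algebra_simps)
      then show "(\<Sum>v\<in>V. incidence tail head v a * y' k v) - tbar A1 t' a \<le> c a"
        using e1 e2 by simp
    qed
    have ne: "1 + \<nu> \<noteq> 0" using pos by simp
    have o1: "(\<Sum>k\<in>K. \<Sum>v\<in>V. bb k v * y' k v) = ((\<Sum>k\<in>K. \<Sum>v\<in>V. bb k v * y k v) - (\<Sum>k\<in>K. \<Sum>v\<in>V. \<eta> k v * bb k v)) / (1 + \<nu>)"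
    proof -
      have "(\<Sum>k\<in>K. \<Sum>v\<in>V. bb k v * y' k v) = (\<Sum>k\<in>K. \<Sum>v\<in>V. (bb k v * y k v - \<eta> k v * bb k v) / (1 + \<nu>))"
        by (intro sum.cong refl) (simp add: y'_def ne field_simps)
      also have "\<dots> = (\<Sum>k\<in>K. \<Sum>v\<in>V. (bb k v * y k v - \<eta> k v * bb k v)) / (1 + \<nu>)"
        by (simp add: sum_divide_distrib)
      finally show ?thesis by (simp add: sum_subtractf)
    qed
    have o2: "(\<Sum>a\<in>A1. w a * t' a) = ((\<Sum>a\<in>A1. w a * t a) + (\<Sum>a\<in>A1. w a * \<tau> a)) / (1 + \<nu>)"
    proof -
      have "(\<Sum>a\<in>A1. w a * t' a) = (\<Sum>a\<in>A1. (w a * t a + w a * \<tau> a) / (1 + \<nu>))"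
        by (intro sum.cong refl) (simp add: t'_def ne field_simps)
      also have "\<dots> = (\<Sum>a\<in>A1. (w a * t a + w a * \<tau> a)) / (1 + \<nu>)"
        by (simp add: sum_divide_distrib)
      finally show ?thesis by (simp add: sum.distrib)
    qed
    have "conj_objective V A1 K orig dest w t' y' * (1 + \<nu>)
        = OPT - ((\<Sum>k\<in>K. \<Sum>v\<in>V. \<eta> k v * bb k v) + (\<Sum>a\<in>A1. w a * \<tau> a))"
    proof -
      have "conj_objective V A1 K orig dest w t' y' = (\<Sum>k\<in>K. \<Sum>v\<in>V. bb k v * y' k v) - (\<Sum>a\<in>A1. w a * t' a)"
        unfolding conj_objective_def bb_def ..
      moreover have "OPT = (\<Sum>k\<in>K. \<Sum>v\<in>V. bb k v * y k v) - (\<Sum>a\<in>A1. w a * t a)"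
        unfolding OPT_def conj_objective_def bb_def ..
      ultimately show ?thesis unfolding o1 o2 using ne by (simp add: diff_divide_distrib[symmetric])
    qed
    also have "\<dots> > OPT * (1 + \<nu>)" using rhs by (simp add: algebra_simps)
    finally have "conj_objective V A1 K orig dest w t' y' > OPT" using pos by simp
    then show False using opt[OF feas'] unfolding OPT_def by simp
  qed
  then obtain z where z: "\<forall>j\<in>J. (\<Sum>i\<in>K \<times> A. M j i * z i) \<le> r j" by blast
  define X where "X k a = z (k, a)" for k a
  have X0: "0 \<le> X k a" if "k \<in> K" "a \<in> A" for k a
  proof -
    have "Inl (k, a) \<in> J" using that by (auto simp: J_def)
    then have "(\<Sum>i\<in>K \<times> A. M (Inl (k, a)) i * z i) \<le> r (Inl (k, a))" using z by blast
    then show ?thesis using that fK fA by (simp add: M_def r_def LF0 X_def)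
  qed
  have Xflow: "(\<Sum>a\<in>A. N v a * X k a) = bb k v" if "k \<in> K" "v \<in> V" for k v
  proof -
    have "Inr (Inl (k, v)) \<in> J" "Inr (Inr (Inl (k, v))) \<in> J" using that by (auto simp: J_def)
    then have "(\<Sum>i\<in>K \<times> A. M (Inr (Inl (k, v))) i * z i) \<le> r (Inr (Inl (k, v)))"
      "(\<Sum>i\<in>K \<times> A. M (Inr (Inr (Inl (k, v)))) i * z i) \<le> r (Inr (Inr (Inl (k, v))))" using z by blast+
    moreover have "(\<Sum>i\<in>K \<times> A. M (Inr (Inl (k, v))) i * z i) = (\<Sum>a\<in>A. N v a * z (k, a))"
      unfolding M_def sum.case snd_conv fst_conv by (rule LF1[OF fK fA that(1)])
    moreover have "(\<Sum>i\<in>K \<times> A. M (Inr (Inr (Inl (k, v)))) i * z i) = (\<Sum>a\<in>A. - N v a * z (k, a))"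
      unfolding M_def sum.case snd_conv fst_conv by (rule LF1[OF fK fA that(1)])
    ultimately show ?thesis
      by (simp add: r_def X_def sum_negf)
  qed
  have Xcap: "(\<Sum>k\<in>K. X k a) \<le> w a" if "a \<in> A1" for a
  proof -
    have "Inr (Inr (Inr (Inl a))) \<in> J" using that by (auto simp: J_def)
    then have "(\<Sum>i\<in>K \<times> A. M (Inr (Inr (Inr (Inl a)))) i * z i) \<le> r (Inr (Inr (Inr (Inl a))))"
      using z by blast
    then show ?thesis using that fK fA A1A by (auto simp: M_def r_def LF2 X_def)
  qed
  have Xcost: "(\<Sum>k\<in>K. \<Sum>a\<in>A. c a * X k a) \<le> OPT"
  proof -
    have "Inr (Inr (Inr (Inr ()))) \<in> J" by (auto simp: J_def)
    then have "(\<Sum>i\<in>K \<times> A. M (Inr (Inr (Inr (Inr ())))) i * z i) \<le> r (Inr (Inr (Inr (Inr ()))))"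
      using z by blast
    then show ?thesis by (simp add: M_def r_def LF3 X_def)
  qed
  define D where "D k = (\<Sum>a\<in>A. X k a * (c a + tbar A1 t a)) - (\<Sum>v\<in>V. bb k v * y k v)" for k
  have yX: "(\<Sum>v\<in>V. bb k v * y k v) = (\<Sum>a\<in>A. X k a * (\<Sum>v\<in>V. N v a * y k v))" if k: "k \<in> K" for k
  proof -
    have "(\<Sum>v\<in>V. bb k v * y k v) = (\<Sum>v\<in>V. (\<Sum>a\<in>A. N v a * X k a) * y k v)"
      using Xflow[OF k] by simp
    also have "\<dots> = (\<Sum>a\<in>A. X k a * (\<Sum>v\<in>V. N v a * y k v))" by (rule wd_swap)
    finally show ?thesis .
  qed
  have D0: "0 \<le> D k" if k: "k \<in> K" for k
  proof -
    have "(\<Sum>a\<in>A. X k a * (\<Sum>v\<in>V. N v a * y k v)) \<le> (\<Sum>a\<in>A. X k a * (c a + tbar A1 t a))"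
    proof (rule sum_mono)
      fix a assume a: "a \<in> A"
      show "X k a * (\<Sum>v\<in>V. N v a * y k v) \<le> X k a * (c a + tbar A1 t a)"
        using yc[OF k a] X0[OF k a] by (intro mult_left_mono) auto
    qed
    then show ?thesis unfolding D_def using yX[OF k] by simp
  qed
  define Cx where "Cx = (\<Sum>k\<in>K. \<Sum>a\<in>A. c a * X k a)"
  define P where "P = (\<Sum>k\<in>K. \<Sum>a\<in>A1. t a * X k a)"
  define W where "W = (\<Sum>a\<in>A1. w a * t a)"
  have fcX: "(\<Sum>a\<in>A. X k a * (c a + tbar A1 t a)) = follower_cost A A1 c t (X k)" for k
    unfolding fc_tbar[OF fA A1A] by (simp add: mult_ac)
  have sumD: "(\<Sum>k\<in>K. D k) = Cx + P - (OPT + W)"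
  proof -
    have "(\<Sum>k\<in>K. D k) = (\<Sum>k\<in>K. follower_cost A A1 c t (X k)) - (\<Sum>k\<in>K. \<Sum>v\<in>V. bb k v * y k v)"
      unfolding D_def fcX by (simp add: sum_subtractf)
    also have "(\<Sum>k\<in>K. follower_cost A A1 c t (X k)) = Cx + P"
      unfolding Cx_def P_def follower_cost_def by (simp add: sum.distrib)
    also have "(\<Sum>k\<in>K. \<Sum>v\<in>V. bb k v * y k v) = OPT + W"
      unfolding OPT_def W_def conj_objective_def bb_def by simp
    finally show ?thesis .
  qed
  have PW: "P \<le> W"
  proof -
    have "P = (\<Sum>a\<in>A1. (\<Sum>k\<in>K. X k a) * t a)" unfolding P_def by (rule sum_w_swap[symmetric])
    also have "\<dots> \<le> W" unfolding W_def
      by (rule sum_mono) (use Xcap t0 in \<open>auto intro: mult_right_mono\<close>)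
    finally show ?thesis .
  qed
  have sD0: "0 \<le> (\<Sum>k\<in>K. D k)" using D0 by (intro sum_nonneg) auto
  have "(\<Sum>k\<in>K. D k) = 0" using sumD PW Xcost sD0 unfolding Cx_def by linarith
  then have Dz: "\<forall>k\<in>K. D k = 0" using sum_nonneg_eq_0_iff[OF fK] D0 by blast
  have PWeq: "P = W" using sumD PW Xcost sD0 unfolding Cx_def by linarith
  show ?thesis
  proof (intro exI[of _ X] conjI ballI)
    show "\<And>a. a \<in> A1 \<Longrightarrow> 0 \<le> t a" using t0 by blast
  next
    fix k assume k: "k \<in> K"
    have ff: "flow_feasible V A tail head (bb k) (X k)"
      unfolding flow_feasible_def using Xflow[OF k] X0[OF k] by (simp add: N_def)
    moreover have "follower_cost A A1 c t (X k) \<le> follower_cost A A1 c t x'"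
      if x': "flow_feasible V A tail head (bb k) x'" for x'
    proof -
      have "follower_cost A A1 c t (X k) = (\<Sum>v\<in>V. bb k v * y k v)"
        using Dz k unfolding D_def fcX by simp
      also have "\<dots> = (\<Sum>a\<in>A. x' a * (\<Sum>v\<in>V. N v a * y k v))"
      proof -
        have "(\<Sum>v\<in>V. bb k v * y k v) = (\<Sum>v\<in>V. (\<Sum>a\<in>A. N v a * x' a) * y k v)"
          using x' unfolding flow_feasible_def N_def by simp
        also have "\<dots> = (\<Sum>a\<in>A. x' a * (\<Sum>v\<in>V. N v a * y k v))" by (rule wd_swap)
        finally show ?thesis .
      qed
      also have "\<dots> \<le> (\<Sum>a\<in>A. x' a * (c a + tbar A1 t a))"
      proof (rule sum_mono)
        fix a assume a: "a \<in> A"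
        show "x' a * (\<Sum>v\<in>V. N v a * y k v) \<le> x' a * (c a + tbar A1 t a)"
          using yc[OF k a] x' a unfolding flow_feasible_def by (intro mult_left_mono) auto
      qed
      also have "\<dots> = follower_cost A A1 c t x'" unfolding fc_tbar[OF fA A1A] by (simp add: mult_ac)
      finally show ?thesis .
    qed
    ultimately show "X k \<in> reaction V A A1 tail head c (demand (orig k) (dest k)) t"
      unfolding reaction_def bb_def by blast
  next
    show "(\<Sum>k\<in>K. \<Sum>a\<in>A1. t a * X k a) = (\<Sum>a\<in>A1. w a * t a)" using PWeq unfolding P_def W_def .
  qed
qed

theorem proposition1:
  fixes V :: "'v set" and A A1 :: "'a set" and tail head :: "'a \<Rightarrow> 'v"
    and c :: "'a \<Rightarrow> real" and K :: "'k set" and orig dest :: "'k \<Rightarrow> 'v"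
  assumes "finite V" and "finite A"
    and "\<forall>a\<in>A. tail a \<in> V \<and> head a \<in> V"
    and "A1 \<subseteq> A" and "A1 \<noteq> {}" and "A1 \<noteq> A"
    and "\<forall>a\<in>A. 0 \<le> c a"
    and "finite K"
    and "\<forall>k\<in>K. orig k \<in> V \<and> dest k \<in> V \<and> orig k \<noteq> dest k"
    and "\<forall>k\<in>K. toll_free_path A A1 tail head (orig k) (dest k)"
  shows "npp_value V A A1 tail head c K orig dest = conj_bilevel_value V A A1 tail head c K orig dest"
proof -
  note fV = assms(1) and fA = assms(2) and A1A = assms(4) and c0 = assms(7) and fK = assms(8)
  have eq: "{ereal (\<Sum>k\<in>K. \<Sum>a\<in>A1. t a * x k a) | t x.
            (\<forall>a\<in>A1. 0 \<le> t a) \<and>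
            (\<forall>k\<in>K. x k \<in> reaction V A A1 tail head c (demand (orig k) (dest k)) t)}
     = {ereal (\<Sum>a\<in>A1. w a * t a) | w t.
            (\<forall>a\<in>A1. 0 \<le> w a) \<and> t \<in> conj_T V A A1 tail head c K orig dest w}"
    (is "?S1 = ?S2")
  proof
    show "?S1 \<subseteq> ?S2"
    proof
      fix e assume "e \<in> ?S1"
      then obtain t x where e: "e = ereal (\<Sum>k\<in>K. \<Sum>a\<in>A1. t a * x k a)"
        and t0: "\<forall>a\<in>A1. 0 \<le> t a"
        and x: "\<forall>k\<in>K. x k \<in> reaction V A A1 tail head c (demand (orig k) (dest k)) t" by blast
      define w where "w a = (\<Sum>k\<in>K. x k a)" for a
      have w0: "\<forall>a\<in>A1. 0 \<le> w a"
        unfolding w_def using x A1A by (auto intro!: sum_nonneg simp: reaction_def flow_feasible_def)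
      have "t \<in> conj_T V A A1 tail head c K orig dest w"
        unfolding w_def by (rule dir1[OF fV fA A1A c0 fK t0 x])
      moreover have "(\<Sum>a\<in>A1. w a * t a) = (\<Sum>k\<in>K. \<Sum>a\<in>A1. t a * x k a)"
        unfolding w_def by (rule sum_w_swap)
      ultimately have "e = ereal (\<Sum>a\<in>A1. w a * t a) \<and> (\<forall>a\<in>A1. 0 \<le> w a) \<and> t \<in> conj_T V A A1 tail head c K orig dest w"
        using e w0 by simp
      then show "e \<in> ?S2" by blast
    qed
  next
    show "?S2 \<subseteq> ?S1"
    proof
      fix e assume "e \<in> ?S2"
      then obtain w t where e: "e = ereal (\<Sum>a\<in>A1. w a * t a)"
        and w0: "\<forall>a\<in>A1. 0 \<le> w a" and tT: "t \<in> conj_T V A A1 tail head c K orig dest w" by blast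
      obtain X where "(\<forall>a\<in>A1. 0 \<le> t a)"
        "\<forall>k\<in>K. X k \<in> reaction V A A1 tail head c (demand (orig k) (dest k)) t"
        "(\<Sum>k\<in>K. \<Sum>a\<in>A1. t a * X k a) = (\<Sum>a\<in>A1. w a * t a)"
        using dir2[OF fV fA A1A fK w0 tT] by blast
      then show "e \<in> ?S1" using e by (auto intro!: exI[of _ t] exI[of _ X])
    qed
  qed
  show ?thesis unfolding npp_value_def conj_bilevel_value_def eq ..
qed

end
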